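(* Let $(a_n)_{n\ge0}$ be a sequence of real numbers such that for every $C_1>1$ there exists $C_0\ge0$ such that for every $q\ge2$ and all integers $m_1,\dots,m_q\ge0$, $$a_{m_1+\cdots+m_q}\le C_1\sum_{i=1}^q a_{m_i}+qC_0.$$ Then $\liminf_{n\to+\infty}\frac1n a_n=\limsup_{n\to+\infty}\frac1n a_n$. *)

theory Defs
  imports "HOL-Analysis.Analysis"
begin

end

theory Submission
  imports Defs
begin

lemma decomp:
  fixes a :: "nat \<Rightarrow> real"
  assumes H: "\<forall>q::nat. \<forall>m::nat \<Rightarrow> nat. q \<ge> 2 \<longrightarrow>
         a (\<Sum>i=1..q. m i) \<le> C1 * (\<Sum>i=1..q. a (m i)) + real q * C0"
    and N: "N \<ge> 1" and n: "n \<ge> N"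
  shows "a n \<le> C1 * (real (n div N) * a N + a (n mod N)) + (real (n div N) + 1) * C0"
proof -
  define k where "k = n div N"
  have k1: "k \<ge> 1" using div_le_mono[OF n, of N] N by (simp add: k_def)
  define m where "m = (\<lambda>i::nat. if i \<le> k then N else n mod N)"
  have s1: "(\<Sum>i=1..Suc k. m i) = n"
  proof -
    have "(\<Sum>i=1..Suc k. m i) = (\<Sum>i=1..k. m i) + n mod N" by (simp add: m_def)
    also have "(\<Sum>i=1..k. m i) = (\<Sum>i=1..k. N)" by (rule sum.cong) (auto simp: m_def)
    finally show ?thesis by (simp add: k_def)
  qed
  have s2: "(\<Sum>i=1..Suc k. a (m i)) = real k * a N + a (n mod N)"
  proof -
    have "(\<Sum>i=1..Suc k. a (m i)) = (\<Sum>i=1..k. a (m i)) + a (n mod N)" by (simp add: m_def)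
    also have "(\<Sum>i=1..k. a (m i)) = (\<Sum>i=1..k. a N)" by (rule sum.cong) (auto simp: m_def)
    finally show ?thesis by simp
  qed
  have h: "a (\<Sum>i=1..Suc k. m i) \<le> C1 * (\<Sum>i=1..Suc k. a (m i)) + real (Suc k) * C0"
  proof -
    have "Suc k \<ge> 2" using k1 by simp
    then show ?thesis using H by blast
  qed
  have "a n \<le> C1 * (real k * a N + a (n mod N)) + real (Suc k) * C0" using h unfolding s1 s2 .
  then show ?thesis by (simp add: k_def algebra_simps)
qed

lemma p1:
  fixes aN kk rr NN x :: real
  assumes "x = kk*NN + rr" "0 \<le> rr" "rr < NN" "x > 0" "kk \<ge> 0"
  shows "kk*aN/x \<le> aN/NN + \<bar>aN\<bar>/x"
proof -
  have NN: "NN > 0" using assms by linarith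
  have "- (\<bar>aN\<bar>*NN) \<le> aN*rr"
  proof -
    have "\<bar>aN*rr\<bar> \<le> \<bar>aN\<bar>*NN" using assms by (simp add: abs_mult mult_left_mono)
    then show ?thesis by linarith
  qed
  then have "kk*aN*NN \<le> aN*x + \<bar>aN\<bar>*NN" using assms by (simp add: algebra_simps)
  then show ?thesis using NN assms by (simp add: divide_simps)
qed

lemma p3:
  fixes C0 kk rr NN x :: real
  assumes "x = kk*NN + rr" "0 \<le> rr" "rr < NN" "x > 0" "kk \<ge> 0" "C0 \<ge> 0"
  shows "(kk+1)*C0/x \<le> C0/NN + C0/x"
proof -
  have NN: "NN > 0" using assms by linarith
  have "kk*NN \<le> x" using assms by simp
  then have "kk*C0*NN \<le> C0 * x" using assms by (metis mult.commute mult.left_commute mult_left_mono)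
  then show ?thesis using NN assms by (simp add: divide_simps) (simp add: algebra_simps)
qed

lemma eventual_bound:
  fixes a :: "nat \<Rightarrow> real"
  assumes H: "\<forall>q::nat. \<forall>m::nat \<Rightarrow> nat. q \<ge> 2 \<longrightarrow>
         a (\<Sum>i=1..q. m i) \<le> C1 * (\<Sum>i=1..q. a (m i)) + real q * C0"
    and C1: "C1 > 0" and C0: "C0 \<ge> 0" and N: "N \<ge> 1" and aN: "a N / real N < M"
    and C0N: "C0 / real N < e" and e: "e > 0"
  shows "eventually (\<lambda>n. a n / real n \<le> C1*M + 2*e) sequentially"
proof -
  define B where "B = (\<Sum>r<N. \<bar>a r\<bar>)"
  define D where "D = C1*\<bar>a N\<bar> + C1*B + C0"
  show ?thesis
  proof (rule eventually_sequentiallyI[of "max N (nat \<lceil>D/e\<rceil> + 1)"])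
    fix n assume n: "max N (nat \<lceil>D/e\<rceil> + 1) \<le> n"
    then have nN: "n \<ge> N" by simp
    define x where "x = real n"
    define kk where "kk = real (n div N)"
    define rr where "rr = real (n mod N)"
    define NN where "NN = real N"
    have NN0: "NN > 0" using N by (simp add: NN_def)
    have x0: "x > 0" using nN N by (simp add: x_def)
    have Dx: "D / x < e"
    proof -
      have "D/e < x" using n unfolding x_def by linarith
      then have "D < e * x" using e by (simp add: divide_simps mult.commute)
      then show ?thesis using x0 by (simp add: divide_simps mult.commute)
    qed
    have xdec: "x = kk*NN + rr"
      unfolding x_def kk_def NN_def rr_def by (metis div_mult_mod_eq of_nat_add of_nat_mult)
    have rr0: "0 \<le> rr" "rr < NN" using N by (auto simp: rr_def NN_def)
    have kk0: "kk \<ge> 0" by (simp add: kk_def)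
    have dec: "a n \<le> C1 * (kk * a N + a (n mod N)) + (kk + 1) * C0"
      using decomp[OF H N nN] by (simp add: kk_def)
    have B: "a (n mod N) \<le> B"
    proof -
      have "a (n mod N) \<le> \<bar>a (n mod N)\<bar>" by simp
      also have "\<dots> \<le> B" unfolding B_def
        by (rule member_le_sum) (use N in auto)
      finally show ?thesis .
    qed
    have "a n / x \<le> (C1 * (kk * a N + a (n mod N)) + (kk + 1) * C0) / x"
      using dec x0 by (simp add: divide_right_mono)
    also have "\<dots> = C1 * (kk * a N / x) + C1 * (a (n mod N) / x) + (kk+1)*C0/x"
      by (simp add: algebra_simps add_divide_distrib)
    also have "\<dots> \<le> C1 * (a N / NN + \<bar>a N\<bar>/x) + C1 * (B / x) + (C0/NN + C0/x)"
    proof -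
      have "C1 * (kk * a N / x) \<le> C1 * (a N / NN + \<bar>a N\<bar>/x)"
        using mult_left_mono[OF p1[OF xdec rr0 x0 kk0, of "a N"], of C1] C1 by simp
      moreover have "C1 * (a (n mod N) / x) \<le> C1 * (B / x)"
        using B C1 x0 by (simp add: mult_left_mono divide_right_mono)
      moreover have "(kk+1)*C0/x \<le> C0/NN + C0/x" using p3[OF xdec rr0 x0 kk0 C0] .
      ultimately show ?thesis by linarith
    qed
    also have "\<dots> = C1 * (a N / NN) + D / x + C0/NN"
      by (simp add: D_def algebra_simps add_divide_distrib)
    also have "\<dots> \<le> C1*M + 2*e"
    proof -
      have "C1 * (a N / NN) \<le> C1 * M" using mult_left_mono[OF less_imp_le[OF aN], of C1] C1 by (simp add: NN_def)
      then show ?thesis using Dx C0N by (simp add: NN_def)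
    qed
    finally show "a n / real n \<le> C1*M + 2*e" by (simp add: x_def)
  qed
qed

theorem lemma7:
  fixes a :: "nat \<Rightarrow> real"
  assumes "\<forall>C1::real. C1 > 1 \<longrightarrow> (\<exists>C0::real. C0 \<ge> 0 \<and>
      (\<forall>q::nat. \<forall>m::nat \<Rightarrow> nat. q \<ge> 2 \<longrightarrow>
         a (\<Sum>i=1..q. m i) \<le> C1 * (\<Sum>i=1..q. a (m i)) + real q * C0))"
  shows "liminf (\<lambda>n. ereal (a n / real n)) = limsup (\<lambda>n. ereal (a n / real n))"
proof -
  define X where "X = (\<lambda>n. ereal (a n / real n))"
  have key: "limsup X \<le> ereal M" if LM: "liminf X < ereal M" for M
  proof (rule ccontr)
    assume "\<not> limsup X \<le> ereal M"
    then have "ereal M < limsup X" by simp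
    then obtain y where y: "ereal M < ereal y" "ereal y < limsup X" using ereal_dense2 by blast
    have My: "M < y" using y by simp
    define e where "e = min (1/2) ((y - M) / (\<bar>M\<bar> + 2))"
    have e0: "e > 0" using My by (simp add: e_def)
    have eM: "e * M + 2 * e \<le> y - M"
    proof -
      have "e * M + 2 * e \<le> e * (\<bar>M\<bar> + 2)" using e0
        by (simp add: algebra_simps mult_left_mono)
      also have "\<dots> \<le> (y - M) / (\<bar>M\<bar> + 2) * (\<bar>M\<bar> + 2)"
        by (rule mult_right_mono) (auto simp: e_def)
      also have "\<dots> = y - M" by simp
      finally show ?thesis .
    qed
    obtain C0 where C0: "C0 \<ge> 0" and H: "\<forall>q::nat. \<forall>m::nat \<Rightarrow> nat. q \<ge> 2 \<longrightarrow>
         a (\<Sum>i=1..q. m i) \<le> (1+e) * (\<Sum>i=1..q. a (m i)) + real q * C0"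
      using assms e0 by (metis less_add_same_cancel1)
    define N0 where "N0 = nat \<lceil>C0/e\<rceil> + 1"
    have "(INF m\<in>{N0..}. X m) < ereal M"
    proof (rule ccontr)
      assume "\<not> ?thesis"
      then have "ereal M \<le> (INF m\<in>{N0..}. X m)" by simp
      also have "\<dots> \<le> liminf X" unfolding liminf_SUP_INF by (rule SUP_upper) simp
      finally show False using LM by simp
    qed
    then obtain N where N: "N \<ge> N0" "X N < ereal M" by (auto simp: INF_less_iff)
    have N1: "N \<ge> 1" using N by (simp add: N0_def)
    have aN: "a N / real N < M" using N by (simp add: X_def)
    have C0N: "C0 / real N < e"
    proof -
      have "C0/e < real N" using N unfolding N0_def by linarith
      then have "C0 < e * real N" using e0 by (simp add: divide_simps mult.commute)
      then show ?thesis using N1 by (simp add: divide_simps mult.commute)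
    qed
    have ev: "eventually (\<lambda>n. a n / real n \<le> (1+e)*M + 2*e) sequentially"
      by (rule eventual_bound[OF H _ C0 N1 aN C0N e0]) (use e0 in simp)
    have "limsup X \<le> ereal ((1+e)*M + 2*e)"
      unfolding X_def by (rule Limsup_bounded) (use ev in \<open>auto elim: eventually_mono\<close>)
    also have "\<dots> \<le> ereal y" using eM by (simp add: algebra_simps)
    finally show False using y by simp
  qed
  have "limsup X \<le> liminf X"
  proof (rule ccontr)
    assume "\<not> ?thesis"
    then have "liminf X < limsup X" by simp
    then obtain z where z: "liminf X < ereal z" "ereal z < limsup X" using ereal_dense2 by blast
    then show False using key[OF z(1)] by simp
  qed
  moreover have "liminf X \<le> limsup X" by (rule Liminf_le_Limsup) simp
  ultimately show ?thesis unfolding X_def by simp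
qed

end
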